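(* Let $m\ge 2$ and let $H_1,\dots,H_k$ be complete graphs, each with at least two vertices. Then for every $n$, $\mathrm{ex}^{\mathrm{col}}(n,(H_1,\dots,H_k),K_m)=\max_{i\le k}\mathcal N(H_i,T_{m-1}(n))$; that is, the maximum of $\sum_{i=1}^k\mathcal N(H_i,G_i)$ over edge-colored $K_m$-free $n$-vertex graphs $G$ is attained by the Tur\'an graph $T_{m-1}(n)$ with all edges of a single color.
   Context: $T_{m-1}(n)$ is the complete $(m-1)$-partite graph on $n$ vertices with parts of size $\lfloor n/(m-1)\rfloor$ or $\lceil n/(m-1)\rceil$. $\mathcal N(H,G)$ is the number of subgraphs of $G$ isomorphic to $H$. For a graph $G$ whose edges are colored with colors $1,\dots,k$, $G_i$ is the subgraph of edges of color $i$; $\mathrm{ex}^{\mathrm{col}}(n,(H_1,\dots,H_k),F)$ is the maximum of $\sum_i\mathcal N(H_i,G_i)$ over all $F$-free $n$-vertex graphs $G$ and all such colorings. *)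

theory Defs
  imports Main
begin

definition is_graph :: "nat \<Rightarrow> nat set set \<Rightarrow> bool" where
  "is_graph n E \<longleftrightarrow> (\<forall>e\<in>E. e \<subseteq> {..<n} \<and> card e = 2)"

definition num_cliques :: "nat \<Rightarrow> nat \<Rightarrow> nat set set \<Rightarrow> nat" where
  "num_cliques n r E = card {S. S \<subseteq> {..<n} \<and> card S = r \<and>
      (\<forall>x\<in>S. \<forall>y\<in>S. x \<noteq> y \<longrightarrow> {x, y} \<in> E)}"

definition Km_free :: "nat \<Rightarrow> nat \<Rightarrow> nat set set \<Rightarrow> bool" where
  "Km_free n m E \<longleftrightarrow> num_cliques n m E = 0"

text \<open>Colored count: colors 1..k, the color-i subgraph G_i, and H_i = K_{r i}.\<close>
definition col_count :: "nat \<Rightarrow> nat \<Rightarrow> (nat \<Rightarrow> nat) \<Rightarrow> nat set set \<Rightarrow> (nat set \<Rightarrow> nat) \<Rightarrow> nat" where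
  "col_count n k r E c = (\<Sum>i=1..k. num_cliques n (r i) {e\<in>E. c e = i})"

definition ex_col :: "nat \<Rightarrow> nat \<Rightarrow> (nat \<Rightarrow> nat) \<Rightarrow> nat \<Rightarrow> nat" where
  "ex_col n k r m = Max {col_count n k r E c | E c.
      is_graph n E \<and> Km_free n m E \<and> (\<forall>e\<in>E. c e \<in> {1..k})}"

text \<open>Turan graph T_p(n) on {..<n}: parts are residue classes mod p,
  of sizes floor(n/p) or ceil(n/p).\<close>
definition turan :: "nat \<Rightarrow> nat \<Rightarrow> nat set set" where
  "turan n p = {{x, y} | x y. x < n \<and> y < n \<and> x mod p \<noteq> y mod p}"

end

theory Submission
  imports Defs
begin

definition esym :: "nat set \<Rightarrow> (nat \<Rightarrow> nat) \<Rightarrow> nat \<Rightarrow> nat" where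
  "esym A w r = (\<Sum>S\<in>{S. S \<subseteq> A \<and> card S = r}. \<Prod>x\<in>S. w x)"

lemma esym_empty: "esym {} w r = (if r = 0 then 1 else 0)"
proof -
  have "{S. S \<subseteq> ({}::nat set) \<and> card S = r} = (if r = 0 then {{}} else {})" by auto
  then show ?thesis unfolding esym_def by simp
qed

lemma esym_0: "finite A \<Longrightarrow> esym A w 0 = 1"
proof -
  assume "finite A"
  then have "{S. S \<subseteq> A \<and> card S = 0} = {{}}" by (auto dest: finite_subset)
  then show ?thesis unfolding esym_def by simp
qed

lemma esym_insert:
  assumes "finite A" "a \<notin> A"
  shows "esym (insert a A) w (Suc r) = esym A w (Suc r) + w a * esym A w r"
proof -
  let ?La = "{S. S \<subseteq> insert a A \<and> card S = Suc r}"
  let ?Lb = "{S. S \<subseteq> A \<and> card S = Suc r}"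
  let ?Lc = "{S. S \<subseteq> A \<and> card S = r}"
  have fin1: "finite ?Lb" by (rule finite_subset[OF _ finite_Pow_iff[THEN iffD2, OF assms(1)]]) auto
  have fin0: "finite ?Lc" by (rule finite_subset[OF _ finite_Pow_iff[THEN iffD2, OF assms(1)]]) auto
  have eq: "?La = ?Lb \<union> insert a ` ?Lc"
  proof
    show "?La \<subseteq> ?Lb \<union> insert a ` ?Lc"
    proof
      fix S assume "S \<in> ?La"
      then have S: "S \<subseteq> insert a A" "card S = Suc r" by blast+
      show "S \<in> ?Lb \<union> insert a ` ?Lc"
      proof (cases "a \<in> S")
        case True
        have "S - {a} \<subseteq> A" using S by auto
        moreover have "card (S - {a}) = r" using S True by (simp add: card_Diff_singleton)
        moreover have "S = insert a (S - {a})" using True by auto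
        ultimately have "S \<in> insert a ` ?Lc" by blast
        then show ?thesis by (rule UnI2)
      next
        case False
        then have "S \<subseteq> A" using S by auto
        then have "S \<in> ?Lb" using S by simp
        then show ?thesis by (rule UnI1)
      qed
    qed
    show "?Lb \<union> insert a ` ?Lc \<subseteq> ?La"
    proof
      fix S assume "S \<in> ?Lb \<union> insert a ` ?Lc"
      then show "S \<in> ?La"
      proof
        assume "S \<in> ?Lb" then show ?thesis by auto
      next
        assume "S \<in> insert a ` ?Lc"
        then obtain T where T: "T \<subseteq> A" "card T = r" "S = insert a T" by auto
        have "finite T" using T assms(1) finite_subset by blast
        moreover have "a \<notin> T" using T assms(2) by auto
        ultimately show ?thesis using T by auto
      qed
    qed
  qed
  have disj: "?Lb \<inter> insert a ` ?Lc = {}" using assms(2) by auto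
  have inj: "inj_on (insert a) ?Lc" using assms(2) unfolding inj_on_def by auto
  have "esym (insert a A) w (Suc r) = (\<Sum>S\<in>?Lb. \<Prod>x\<in>S. w x) + (\<Sum>S\<in>insert a ` ?Lc. \<Prod>x\<in>S. w x)"
    unfolding esym_def eq using fin1 fin0 disj by (simp add: sum.union_disjoint)
  also have "(\<Sum>S\<in>insert a ` ?Lc. \<Prod>x\<in>S. w x) = (\<Sum>S\<in>?Lc. \<Prod>x\<in>insert a S. w x)"
    using inj by (simp add: sum.reindex)
  also have "\<dots> = (\<Sum>S\<in>?Lc. w a * (\<Prod>x\<in>S. w x))"
  proof (rule sum.cong)
    fix S assume "S \<in> ?Lc"
    then have "finite S" "a \<notin> S" using assms finite_subset by auto
    then show "(\<Prod>x\<in>insert a S. w x) = w a * (\<Prod>x\<in>S. w x)" by simp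
  qed simp
  finally show ?thesis unfolding esym_def by (simp add: sum_distrib_left)
qed

lemma esym_cong: "(\<And>x. x \<in> A \<Longrightarrow> w x = w' x) \<Longrightarrow> esym A w r = esym A w' r"
  unfolding esym_def by (intro sum.cong refl prod.cong) auto

lemma esym_pad:
  assumes "finite Z" "finite A" "A \<inter> Z = {}" "\<And>x. x \<in> Z \<Longrightarrow> w x = 0"
  shows "esym (A \<union> Z) w r = esym A w r"
  using assms
proof (induction Z arbitrary: r rule: finite_induct)
  case empty then show ?case by simp
next
  case (insert z Z)
  have fin: "finite (A \<union> Z)" using insert by auto
  have nz: "z \<notin> A \<union> Z" using insert by auto
  have IH: "\<And>r. esym (A \<union> Z) w r = esym A w r" using insert by auto
  show ?case
  proof (cases r)
    case 0 then show ?thesis using fin insert by (simp add: esym_0)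
  next
    case (Suc q)
    have "A \<union> insert z Z = insert z (A \<union> Z)" by auto
    then show ?thesis using esym_insert[OF fin nz, of w q] IH insert.prems Suc by simp
  qed
qed

lemma esym_reindex:
  assumes "finite I" "inj_on h I"
  shows "esym (h ` I) w r = esym I (w \<circ> h) r"
  using assms
proof (induction I arbitrary: r rule: finite_induct)
  case empty then show ?case by (simp add: esym_empty)
next
  case (insert a I)
  have nz: "h a \<notin> h ` I" using insert by auto
  have inj: "inj_on h I" using insert by auto
  show ?case
  proof (cases r)
    case 0 then show ?thesis using insert by (simp add: esym_0)
  next
    case (Suc q)
    have "esym (h ` insert a I) w r = esym (insert (h a) (h ` I)) w (Suc q)" using Suc by simp
    also have "\<dots> = esym (h ` I) w (Suc q) + w (h a) * esym (h ` I) w q"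
      by (rule esym_insert[OF finite_imageI[OF insert(1)] nz])
    also have "\<dots> = esym I (w \<circ> h) (Suc q) + (w \<circ> h) a * esym I (w \<circ> h) q"
      using insert.IH[OF inj] by (simp add: o_def)
    also have "\<dots> = esym (insert a I) (w \<circ> h) r"
      using esym_insert[OF insert(1,2), of "w \<circ> h" q] Suc by simp
    finally show ?thesis .
  qed
qed

lemma esym_expand:
  assumes "finite I" "a \<in> I" "b \<in> I" "a \<noteq> b"
  shows "esym I w (Suc 0) = esym (I - {a,b}) w (Suc 0) + w a + w b"
    and "esym I w (Suc (Suc q)) = esym (I - {a,b}) w (Suc (Suc q))
            + (w a + w b) * esym (I - {a,b}) w (Suc q) + (w a * w b) * esym (I - {a,b}) w q"
proof -
  let ?I0 = "I - {a,b}"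
  have fin0: "finite ?I0" using assms by auto
  have finJ: "finite (insert b ?I0)" using fin0 by auto
  have I: "I = insert a (insert b ?I0)" using assms by auto
  have na: "a \<notin> insert b ?I0" using assms by auto
  have nb: "b \<notin> ?I0" by auto
  have "esym I w (Suc 0) = esym (insert b ?I0) w (Suc 0) + w a * esym (insert b ?I0) w 0"
    using esym_insert[OF finJ na] I by metis
  also have "\<dots> = esym ?I0 w (Suc 0) + w b * esym ?I0 w 0 + w a"
    using esym_insert[OF fin0 nb] esym_0[OF finJ] by simp
  finally show "esym I w (Suc 0) = esym (I - {a,b}) w (Suc 0) + w a + w b"
    using esym_0[OF fin0] by simp
  have "esym I w (Suc (Suc q)) = esym (insert b ?I0) w (Suc (Suc q)) + w a * esym (insert b ?I0) w (Suc q)"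
    using esym_insert[OF finJ na] I by metis
  also have "\<dots> = esym ?I0 w (Suc (Suc q)) + w b * esym ?I0 w (Suc q)
        + w a * (esym ?I0 w (Suc q) + w b * esym ?I0 w q)"
    using esym_insert[OF fin0 nb] by simp
  finally show "esym I w (Suc (Suc q)) = esym (I - {a,b}) w (Suc (Suc q))
            + (w a + w b) * esym (I - {a,b}) w (Suc q) + (w a * w b) * esym (I - {a,b}) w q"
    by (simp add: algebra_simps)
qed

lemma nat_prod_transfer:
  fixes x y :: nat
  assumes "y + 1 \<le> x"
  shows "x * y \<le> (x - 1) * (y + 1)"
proof -
  obtain d where d: "x = y + 1 + d" using assms by (metis le_add_diff_inverse)
  have "(x - 1) * (y + 1) = (y + d) * (y + 1)" using d by simp
  also have "\<dots> = x * y + d" using d by (simp add: algebra_simps)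
  finally show ?thesis by simp
qed

lemma esym_transfer:
  assumes "finite I" "a \<in> I" "b \<in> I" "a \<noteq> b" "w b + 1 \<le> w a"
  shows "esym I w r \<le> esym I (w(a := w a - 1, b := w b + 1)) r"
proof -
  define w' where "w' = w(a := w a - 1, b := w b + 1)"
  let ?I0 = "I - {a,b}"
  have cong: "\<And>j. esym ?I0 w' j = esym ?I0 w j" unfolding w'_def by (rule esym_cong) auto
  have wa: "w' a = w a - 1" and wb: "w' b = w b + 1" using assms(4) unfolding w'_def by auto
  have s: "w' a + w' b = w a + w b" using wa wb assms(5) by simp
  have p: "w a * w b \<le> w' a * w' b" unfolding wa wb by (rule nat_prod_transfer[OF assms(5)])
  have "esym I w r \<le> esym I w' r"
  proof (cases r)
    case 0 then show ?thesis using esym_0[OF assms(1)] by simp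
  next
    case (Suc r')
    show ?thesis
    proof (cases r')
      case 0
      have e1: "esym I w r = esym ?I0 w (Suc 0) + w a + w b"
        using esym_expand(1)[OF assms(1-4), of w] Suc 0 by simp
      have e2: "esym I w' r = esym ?I0 w (Suc 0) + w' a + w' b"
        using esym_expand(1)[OF assms(1-4), of w'] Suc 0 cong by simp
      show ?thesis using e1 e2 s by simp
    next
      case (Suc q)
      have e1: "esym I w r = esym ?I0 w (Suc (Suc q)) + (w a + w b) * esym ?I0 w (Suc q) + (w a * w b) * esym ?I0 w q"
        using esym_expand(2)[OF assms(1-4), of w q] Suc \<open>r = Suc r'\<close> by simp
      have e2: "esym I w' r = esym ?I0 w (Suc (Suc q)) + (w' a + w' b) * esym ?I0 w (Suc q) + (w' a * w' b) * esym ?I0 w q"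
        using esym_expand(2)[OF assms(1-4), of w' q] Suc \<open>r = Suc r'\<close> cong by simp
      have "(w a * w b) * esym ?I0 w q \<le> (w' a * w' b) * esym ?I0 w q"
        using p by (rule mult_right_mono) simp
      then show ?thesis unfolding e1 e2 s by simp
    qed
  qed
  then show ?thesis unfolding w'_def .
qed

lemma esym_balance:
  assumes "finite I" "\<forall>x\<in>I. \<forall>y\<in>I. t y \<le> t x + 1" "sum w I = sum t I"
  shows "esym I w r \<le> esym I t r"
  using assms(3)
proof (induction "\<Sum>x\<in>I. w x - t x" arbitrary: w rule: less_induct)
  case less
  show ?case
  proof (cases "\<exists>a\<in>I. t a < w a")
    case False
    then have le: "\<forall>x\<in>I. w x \<le> t x" by (simp add: not_less)
    have "\<forall>x\<in>I. w x = t x"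
    proof (rule ccontr)
      assume "\<not> (\<forall>x\<in>I. w x = t x)"
      then obtain x where "x \<in> I" "w x \<noteq> t x" by blast
      then have "\<exists>x\<in>I. w x < t x" using le le_neq_implies_less by blast
      then have "sum w I < sum t I" using sum_strict_mono_ex1[OF assms(1) le] by blast
      then show False using less.prems by simp
    qed
    then have "esym I w r = esym I t r" by (intro esym_cong) auto
    then show ?thesis by simp
  next
    case True
    then obtain a where a: "a \<in> I" "t a < w a" by blast
    have "\<exists>b\<in>I. w b < t b"
    proof (rule ccontr)
      assume "\<not> (\<exists>b\<in>I. w b < t b)"
      then have "\<forall>x\<in>I. t x \<le> w x" by (simp add: not_less)
      then have "sum t I < sum w I" using sum_strict_mono_ex1[OF assms(1)] a by blast
      then show False using less.prems by simp
    qed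
    then obtain b where b: "b \<in> I" "w b < t b" by blast
    have ab: "a \<noteq> b" using a b by auto
    have tb: "t b \<le> t a + 1" using assms(2) a b by blast
    have wab: "w b + 1 \<le> w a" using a b tb by linarith
    define w' where "w' = w(a := w a - 1, b := w b + 1)"
    have wa': "w' a = w a - 1" and wb': "w' b = w b + 1" and wo: "\<And>x. x \<noteq> a \<Longrightarrow> x \<noteq> b \<Longrightarrow> w' x = w x"
      using ab unfolding w'_def by auto
    have step: "esym I w r \<le> esym I w' r" unfolding w'_def by (rule esym_transfer[OF assms(1) a(1) b(1) ab wab])
    have sumeq: "sum w' I = sum w I"
    proof -
      have r1: "sum w' I = w' a + sum w' (I - {a})" using a assms(1) by (simp add: sum.remove)
      have r2: "sum w' (I - {a}) = w' b + sum w' (I - {a} - {b})" using b ab assms(1) by (simp add: sum.remove)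
      have r3: "sum w I = w a + sum w (I - {a})" using a assms(1) by (simp add: sum.remove)
      have r4: "sum w (I - {a}) = w b + sum w (I - {a} - {b})" using b ab assms(1) by (simp add: sum.remove)
      have r5: "sum w' (I - {a} - {b}) = sum w (I - {a} - {b})" by (rule sum.cong) (auto simp: wo)
      show ?thesis using r1 r2 r3 r4 r5 wa' wb' wab by linarith
    qed
    have dec: "(\<Sum>x\<in>I. w' x - t x) < (\<Sum>x\<in>I. w x - t x)"
    proof (rule sum_strict_mono_ex1[OF assms(1)])
      show "\<forall>x\<in>I. w' x - t x \<le> w x - t x"
      proof
        fix x assume "x \<in> I"
        show "w' x - t x \<le> w x - t x"
        proof (cases "x = a")
          case True then show ?thesis using wa' by simp
        next
          case False
          show ?thesis
          proof (cases "x = b")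
            case True then show ?thesis using wb' b by simp
          next
            case False2: False
            then show ?thesis using wo False by simp
          qed
        qed
      qed
      show "\<exists>x\<in>I. w' x - t x < w x - t x" using a wa' by (intro bexI[of _ a]) auto
    qed
    have "esym I w' r \<le> esym I t r" using less.hyps[OF dec] sumeq less.prems by simp
    then show ?thesis using step by simp
  qed
qed

lemma tur_card:
  assumes "0 < p" "j < p"
  shows "card {x\<in>{..<n}. x mod p = j} = n div p + (if j < n mod p then 1 else 0)"
proof (induction n)
  case 0 then show ?case by simp
next
  case (Suc n)
  have set: "{x\<in>{..<Suc n}. x mod p = j} = {x\<in>{..<n}. x mod p = j} \<union> (if n mod p = j then {n} else {})"
    by (auto simp: less_Suc_eq)
  have c: "card {x\<in>{..<Suc n}. x mod p = j} = card {x\<in>{..<n}. x mod p = j} + (if n mod p = j then 1 else 0)"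
    unfolding set by auto
  have lt: "n mod p < p" using assms by simp
  show ?case
  proof (cases "Suc (n mod p) = p")
    case True
    then have "Suc n mod p = 0" "Suc n div p = Suc (n div p)"
      using mod_Suc[of n p] div_Suc[of n p] by auto
    then show ?thesis using c Suc.IH True assms by auto
  next
    case False
    then have "Suc n mod p = Suc (n mod p)" "Suc n div p = n div p"
      using mod_Suc[of n p] div_Suc[of n p] by auto
    then show ?thesis using c Suc.IH False assms lt by auto
  qed
qed

definition tcnt :: "nat \<Rightarrow> nat \<Rightarrow> nat \<Rightarrow> nat" where
  "tcnt n p j = card {x\<in>{..<n}. x mod p = j}"

lemma tcnt_bal: "0 < p \<Longrightarrow> i < p \<Longrightarrow> j < p \<Longrightarrow> tcnt n p j \<le> tcnt n p i + 1"
  unfolding tcnt_def using tur_card by simp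

lemma tcnt_sum: assumes "0 < p" shows "(\<Sum>j<p. tcnt n p j) = n"
proof -
  have "(\<Sum>j<p. tcnt n p j) = (\<Sum>j<p. n div p + (if j < n mod p then 1 else 0))"
    unfolding tcnt_def using tur_card[OF assms] by simp
  also have "\<dots> = p * (n div p) + (\<Sum>j<p. (if j < n mod p then 1 else 0))"
    by (simp add: sum.distrib)
  also have "(\<Sum>j<p. (if j < n mod p then 1 else (0::nat))) = card ({..<p} \<inter> {j. j < n mod p})"
    by (simp add: sum.If_cases)
  also have "{..<p} \<inter> {j. j < n mod p} = {..<n mod p}"
    using assms mod_less_divisor[of p n] by (auto simp del: mod_less_divisor)
  finally show ?thesis by simp
qed

lemma count_inj:
  assumes "finite B"
  shows "finite A \<Longrightarrow> f ` A \<subseteq> B \<Longrightarrow>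
    card {S. S \<subseteq> A \<and> card S = r \<and> inj_on f S} = esym B (\<lambda>j. card {x\<in>A. f x = j}) r"
  using assms
proof (induction B arbitrary: A r rule: finite_induct)
  case empty
  then have "A = {}" by auto
  then have "{S. S \<subseteq> A \<and> card S = r \<and> inj_on f S} = (if r = 0 then {{}} else {})" by auto
  then show ?case by (simp add: esym_empty)
next
  case (insert b B)
  define A' where "A' = {x\<in>A. f x \<noteq> b}"
  define Ab where "Ab = {x\<in>A. f x = b}"
  have finA': "finite A'" "finite Ab" using insert.prems unfolding A'_def Ab_def by auto
  have imA': "f ` A' \<subseteq> B" using insert.prems unfolding A'_def by auto
  have w: "\<And>j. j \<in> B \<Longrightarrow> card {x\<in>A'. f x = j} = card {x\<in>A. f x = j}"
  proof -
    fix j assume "j \<in> B"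
    then have "j \<noteq> b" using insert.hyps by auto
    then have "{x\<in>A'. f x = j} = {x\<in>A. f x = j}" unfolding A'_def by auto
    then show "card {x\<in>A'. f x = j} = card {x\<in>A. f x = j}" by simp
  qed
  have IH: "\<And>r. card {S. S \<subseteq> A' \<and> card S = r \<and> inj_on f S} = esym B (\<lambda>j. card {x\<in>A. f x = j}) r"
  proof -
    fix r
    have "card {S. S \<subseteq> A' \<and> card S = r \<and> inj_on f S} = esym B (\<lambda>j. card {x\<in>A'. f x = j}) r"
      using insert.IH[OF finA'(1) imA'] .
    also have "\<dots> = esym B (\<lambda>j. card {x\<in>A. f x = j}) r" by (rule esym_cong) (rule w)
    finally show "card {S. S \<subseteq> A' \<and> card S = r \<and> inj_on f S} = esym B (\<lambda>j. card {x\<in>A. f x = j}) r" .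
  qed
  show ?case
  proof (cases r)
    case 0
    have "{S. S \<subseteq> A \<and> card S = r \<and> inj_on f S} = {{}}"
      using 0 insert.prems by (auto dest: finite_subset)
    then show ?thesis using esym_0[of "insert b B"] insert.hyps 0 by simp
  next
    case (Suc q)
    let ?La = "{S. S \<subseteq> A \<and> card S = Suc q \<and> inj_on f S}"
    let ?Lb = "{S. S \<subseteq> A' \<and> card S = Suc q \<and> inj_on f S}"
    let ?Lc = "{S. S \<subseteq> A' \<and> card S = q \<and> inj_on f S}"
    let ?g = "\<lambda>(x, S). insert x S"
    have finLb: "finite ?Lb" by (rule finite_subset[OF _ finite_Pow_iff[THEN iffD2, OF finA'(1)]]) auto
    have finLc: "finite ?Lc" by (rule finite_subset[OF _ finite_Pow_iff[THEN iffD2, OF finA'(1)]]) auto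
    have inj: "inj_on ?g (Ab \<times> ?Lc)"
    proof (rule inj_onI)
      fix p1 p2 assume p1: "p1 \<in> Ab \<times> ?Lc" and p2: "p2 \<in> Ab \<times> ?Lc" and eq: "?g p1 = ?g p2"
      obtain x S where xS: "p1 = (x, S)" by fastforce
      obtain y T where yT: "p2 = (y, T)" by fastforce
      have x: "x \<in> Ab" "S \<subseteq> A'" and y: "y \<in> Ab" "T \<subseteq> A'" using p1 p2 xS yT by auto
      have e: "insert x S = insert y T" using eq xS yT by simp
      have "x \<notin> T" "y \<notin> S" "x \<notin> S" "y \<notin> T" using x y unfolding Ab_def A'_def by auto
      then have "x = y" using e by blast
      moreover have "S = T" using e \<open>x \<notin> S\<close> \<open>y \<notin> T\<close> \<open>x = y\<close> by (metis Diff_insert_absorb)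
      ultimately show "p1 = p2" using xS yT by simp
    qed
    have eq: "?La = ?Lb \<union> ?g ` (Ab \<times> ?Lc)"
    proof
      show "?La \<subseteq> ?Lb \<union> ?g ` (Ab \<times> ?Lc)"
      proof
        fix S assume "S \<in> ?La"
        then have S: "S \<subseteq> A" "card S = Suc q" "inj_on f S" by blast+
        show "S \<in> ?Lb \<union> ?g ` (Ab \<times> ?Lc)"
        proof (cases "S \<inter> Ab = {}")
          case True
          then have "S \<subseteq> A'" using S unfolding A'_def Ab_def by auto
          then show ?thesis using S by blast
        next
          case False
          then obtain x where x: "x \<in> S" "x \<in> Ab" by blast
          have sub: "S - {x} \<subseteq> A'"
          proof
            fix y assume y: "y \<in> S - {x}"
            have "f y \<noteq> f x" using S(3) x(1) y unfolding inj_on_def by blast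
            then show "y \<in> A'" using y S x unfolding A'_def Ab_def by auto
          qed
          have c: "card (S - {x}) = q" using S x by (simp add: card_Diff_singleton)
          have i: "inj_on f (S - {x})" using S(3) by (rule inj_on_subset) auto
          have "S = ?g (x, S - {x})" using x by auto
          moreover have "(x, S - {x}) \<in> Ab \<times> ?Lc" using x sub c i by blast
          ultimately show ?thesis by blast
        qed
      qed
      show "?Lb \<union> ?g ` (Ab \<times> ?Lc) \<subseteq> ?La"
      proof
        fix S assume "S \<in> ?Lb \<union> ?g ` (Ab \<times> ?Lc)"
        then show "S \<in> ?La"
        proof
          assume "S \<in> ?Lb" then show ?thesis unfolding A'_def by auto
        next
          assume "S \<in> ?g ` (Ab \<times> ?Lc)"
          then obtain x T where xT: "x \<in> Ab" "T \<subseteq> A'" "card T = q" "inj_on f T" "S = insert x T" by auto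
          have finT: "finite T" using xT(2) finA'(1) finite_subset by blast
          have xn: "x \<notin> T" using xT unfolding A'_def Ab_def by auto
          have fx: "f x \<notin> f ` T" using xT unfolding A'_def Ab_def by auto
          have "S \<subseteq> A" using xT unfolding A'_def Ab_def by auto
          moreover have "card S = Suc q" using xT finT xn by simp
          moreover have "inj_on f S" using xT fx xn by simp
          ultimately show ?thesis by blast
        qed
      qed
    qed
    have disj: "?Lb \<inter> ?g ` (Ab \<times> ?Lc) = {}" unfolding A'_def Ab_def by auto
    have "card ?La = card ?Lb + card (?g ` (Ab \<times> ?Lc))"
      unfolding eq using finLb finLc finA' disj by (simp add: card_Un_disjoint)
    also have "card (?g ` (Ab \<times> ?Lc)) = card Ab * card ?Lc"
      using inj by (simp add: card_image card_cartesian_product)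
    also have "card ?Lb = esym B (\<lambda>j. card {x\<in>A. f x = j}) (Suc q)" by (rule IH)
    also have "card ?Lc = esym B (\<lambda>j. card {x\<in>A. f x = j}) q" by (rule IH)
    finally have "card ?La = esym B (\<lambda>j. card {x\<in>A. f x = j}) (Suc q) + card Ab * esym B (\<lambda>j. card {x\<in>A. f x = j}) q" .
    also have "\<dots> = esym (insert b B) (\<lambda>j. card {x\<in>A. f x = j}) (Suc q)"
      using esym_insert[OF insert.hyps(1,2), of "\<lambda>j. card {x\<in>A. f x = j}" q] unfolding Ab_def by simp
    finally show ?thesis using Suc by simp
  qed
qed

lemma turan_mem:
  assumes "x < n" "y < n"
  shows "{x,y} \<in> turan n p \<longleftrightarrow> x mod p \<noteq> y mod p"
proof
  assume "{x,y} \<in> turan n p"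
  then obtain x' y' where e: "{x,y} = {x',y'}" "x' mod p \<noteq> y' mod p" unfolding turan_def by blast
  then show "x mod p \<noteq> y mod p" by (auto simp: doubleton_eq_iff)
next
  assume "x mod p \<noteq> y mod p"
  then show "{x,y} \<in> turan n p" unfolding turan_def using assms by blast
qed

lemma turan_cliques:
  "num_cliques n r (turan n p) = card {S. S \<subseteq> {..<n} \<and> card S = r \<and> inj_on (\<lambda>x. x mod p) S}"
proof -
  have "{S. S \<subseteq> {..<n} \<and> card S = r \<and> (\<forall>x\<in>S. \<forall>y\<in>S. x \<noteq> y \<longrightarrow> {x, y} \<in> turan n p)}
      = {S. S \<subseteq> {..<n} \<and> card S = r \<and> inj_on (\<lambda>x. x mod p) S}"
  proof (rule Collect_cong)
    fix S
    show "(S \<subseteq> {..<n} \<and> card S = r \<and> (\<forall>x\<in>S. \<forall>y\<in>S. x \<noteq> y \<longrightarrow> {x, y} \<in> turan n p)) =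
          (S \<subseteq> {..<n} \<and> card S = r \<and> inj_on (\<lambda>x. x mod p) S)"
    proof (cases "S \<subseteq> {..<n}")
      case True
      then have "(\<forall>x\<in>S. \<forall>y\<in>S. x \<noteq> y \<longrightarrow> {x, y} \<in> turan n p) = (\<forall>x\<in>S. \<forall>y\<in>S. x \<noteq> y \<longrightarrow> x mod p \<noteq> y mod p)"
        using turan_mem by (meson lessThan_iff subsetD)
      also have "\<dots> = inj_on (\<lambda>x. x mod p) S" unfolding inj_on_def by blast
      finally show ?thesis using True by simp
    qed simp
  qed
  then show ?thesis unfolding num_cliques_def by simp
qed

lemma turan_esym:
  assumes "0 < p"
  shows "num_cliques n r (turan n p) = esym {..<p} (tcnt n p) r"
proof -
  have "num_cliques n r (turan n p) = esym {..<p} (\<lambda>j. card {x\<in>{..<n}. x mod p = j}) r"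
    unfolding turan_cliques by (rule count_inj) (use assms in auto)
  also have "(\<lambda>j. card {x\<in>{..<n}. x mod p = j}) = tcnt n p" unfolding tcnt_def by (rule ext) simp
  finally show ?thesis .
qed

lemma stepC:
  assumes "P \<subseteq> {..<n}" "card P \<le> p" "0 < p" "sum s P = n"
  shows "esym P s r \<le> num_cliques n r (turan n p)"
proof -
  define w where "w = (\<lambda>x. if x \<in> P then s x else 0)"
  define Z where "Z = {n..<n + (p - card P)}"
  define I where "I = P \<union> Z"
  have finP: "finite P" using assms(1) finite_subset by blast
  have disj: "P \<inter> Z = {}" using assms(1) unfolding Z_def by auto
  have finI: "finite I" unfolding I_def Z_def using finP by simp
  have cardI: "card I = p" unfolding I_def using finP disj assms(2) unfolding Z_def
    by (simp add: card_Un_disjoint)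
  have e1: "esym P s r = esym P w r" by (rule esym_cong) (simp add: w_def)
  also have "\<dots> = esym I w r" unfolding I_def
    by (rule esym_pad[symmetric]) (use finP disj in \<open>auto simp: Z_def w_def\<close>)
  finally have e2: "esym P s r = esym I w r" .
  obtain h where h: "bij_betw h I {..<p}" using finite_same_card_bij[OF finI _ ] cardI by force
  define t' where "t' = tcnt n p \<circ> h"
  have hI: "\<And>x. x \<in> I \<Longrightarrow> h x < p" using h unfolding bij_betw_def by auto
  have bal: "\<forall>x\<in>I. \<forall>y\<in>I. t' y \<le> t' x + 1"
  proof (intro ballI)
    fix x y assume "x \<in> I" "y \<in> I"
    then show "t' y \<le> t' x + 1" unfolding t'_def o_def by (intro tcnt_bal[OF assms(3) hI hI])
  qed
  have st: "sum t' I = n"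
  proof -
    have "sum t' I = sum (\<lambda>x. tcnt n p (h x)) I" unfolding t'_def o_def by (rule refl)
    also have "\<dots> = sum (tcnt n p) {..<p}" by (rule sum.reindex_bij_betw[OF h])
    also have "\<dots> = n" by (rule tcnt_sum[OF assms(3)])
    finally show ?thesis .
  qed
  have sw: "sum w I = n"
  proof -
    have "sum w I = sum w P + sum w Z" unfolding I_def using finP disj by (simp add: Z_def sum.union_disjoint)
    also have "sum w Z = 0"
    proof (rule sum.neutral, rule ballI)
      fix x assume "x \<in> Z"
      then have "x \<notin> P" using disj by blast
      then show "w x = 0" unfolding w_def by simp
    qed
    also have "sum w P = sum s P" unfolding w_def by (rule sum.cong) simp_all
    finally show ?thesis using assms(4) by simp
  qed
  have "esym I w r \<le> esym I t' r" by (rule esym_balance[OF finI bal]) (simp add: st sw)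
  also have "esym I t' r = esym (h ` I) (tcnt n p) r"
    unfolding t'_def using esym_reindex[OF finI, of h "tcnt n p" r] h unfolding bij_betw_def by simp
  also have "h ` I = {..<p}" using h unfolding bij_betw_def by simp
  also have "esym {..<p} (tcnt n p) r = num_cliques n r (turan n p)" using turan_esym[OF assms(3)] by simp
  finally show ?thesis using e2 by simp
qed

definition clq :: "nat set set \<Rightarrow> (nat set \<Rightarrow> nat) \<Rightarrow> nat \<Rightarrow> nat \<Rightarrow> nat set \<Rightarrow> nat set set" where
  "clq E c i r A = {S. S \<subseteq> A \<and> card S = r \<and> (\<forall>x\<in>S. \<forall>y\<in>S. x \<noteq> y \<longrightarrow> {x,y} \<in> E \<and> c {x,y} = i)}"

definition Phi :: "nat \<Rightarrow> (nat \<Rightarrow> nat) \<Rightarrow> nat set set \<Rightarrow> (nat set \<Rightarrow> nat) \<Rightarrow> (nat \<Rightarrow> nat) \<Rightarrow> nat set \<Rightarrow> nat" where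
  "Phi k r E c s A = (\<Sum>i=1..k. \<Sum>S\<in>clq E c i (r i) A. \<Prod>x\<in>S. s x)"

definition EP :: "nat set \<Rightarrow> nat set set" where
  "EP P = {e. e \<subseteq> P \<and> card e = 2}"

definition cp :: "nat set \<Rightarrow> nat \<Rightarrow> nat \<Rightarrow> (nat set \<Rightarrow> nat) \<Rightarrow> nat set \<Rightarrow> nat" where
  "cp P a b c = (\<lambda>e. if e \<in> EP P then (if a \<in> e \<and> b \<notin> e then c (insert b (e - {a})) else c e) else 0)"

lemma finite_clq: "finite A \<Longrightarrow> finite (clq E c i r A)"
  unfolding clq_def by (rule finite_subset[OF _ finite_Pow_iff[THEN iffD2]]) auto

lemma pair_EP: "u \<in> P \<Longrightarrow> v \<in> P \<Longrightarrow> u \<noteq> v \<Longrightarrow> {u,v} \<in> EP P"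
  unfolding EP_def by auto

lemma cp_pair:
  assumes "u \<in> P" "v \<in> P" "u \<noteq> v" "a \<noteq> b"
  shows "cp P a b c {u,v} = (if u = a \<and> v \<noteq> b then c {b,v} else if v = a \<and> u \<noteq> b then c {b,u} else c {u,v})"
proof -
  have e: "{u,v} \<in> EP P" using assms(1-3) by (rule pair_EP)
  show ?thesis
  proof (cases "u = a \<and> v \<noteq> b")
    case True
    then have "a \<in> {u,v} \<and> b \<notin> {u,v}" using assms by auto
    moreover have "insert b ({u,v} - {a}) = {b,v}" using True assms by auto
    ultimately show ?thesis using e True unfolding cp_def by simp
  next
    case F1: False
    show ?thesis
    proof (cases "v = a \<and> u \<noteq> b")
      case True
      then have "a \<in> {u,v} \<and> b \<notin> {u,v}" using assms by auto
      moreover have "insert b ({u,v} - {a}) = {b,u}" using True assms by auto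
      ultimately show ?thesis using e True F1 unfolding cp_def by simp
    next
      case False
      then have "\<not> (a \<in> {u,v} \<and> b \<notin> {u,v})" using F1 by auto
      then have L: "cp P a b c {u,v} = c {u,v}" unfolding cp_def
        by (simp only: if_P[OF e] if_not_P[OF \<open>\<not> (a \<in> {u,v} \<and> b \<notin> {u,v})\<close>] if_False)
      show ?thesis unfolding L by (rule sym, rule trans[OF if_not_P[OF F1] if_not_P[OF False]])
    qed
  qed
qed

lemma sum_split: "finite A \<Longrightarrow> sum g A = sum g {x\<in>A. Q x} + sum g {x\<in>A. \<not> Q x}"
proof -
  assume f: "finite A"
  have "A = {x\<in>A. Q x} \<union> {x\<in>A. \<not> Q x}" by blast
  then have "sum g A = sum g ({x\<in>A. Q x} \<union> {x\<in>A. \<not> Q x})" by simp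
  also have "\<dots> = sum g {x\<in>A. Q x} + sum g {x\<in>A. \<not> Q x}"
    using f by (intro sum.union_disjoint) auto
  finally show ?thesis .
qed

lemma half:
  fixes s :: "nat \<Rightarrow> nat"
  assumes P: "finite P" "a \<in> P" "b \<in> P" "a \<noteq> b"
  shows "s b * (\<Sum>S\<in>clq UNIV (cp P a b c) i r P. prod s S)
     \<ge> s b * (\<Sum>S\<in>{S\<in>clq UNIV c i r P. \<not> (a \<in> S \<and> b \<notin> S)}. prod s S)
       + s a * (\<Sum>S\<in>{S\<in>clq UNIV c i r P. a \<notin> S \<and> b \<in> S}. prod s S)"
proof -
  let ?c' = "cp P a b c"
  let ?F = "clq UNIV c i r P"
  let ?F' = "clq UNIV ?c' i r P"
  let ?A' = "{S\<in>?F'. a \<in> S \<and> b \<notin> S}"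
  let ?B = "{S\<in>?F. a \<notin> S \<and> b \<in> S}"
  let ?h = "\<lambda>S. insert b (S - {a})"
  have finF: "finite ?F" "finite ?F'" using P by (auto intro: finite_clq)
  have sub: "{S\<in>?F. \<not> (a \<in> S \<and> b \<notin> S)} \<subseteq> {S\<in>?F'. \<not> (a \<in> S \<and> b \<notin> S)}"
  proof
    fix S assume S: "S \<in> {S\<in>?F. \<not> (a \<in> S \<and> b \<notin> S)}"
    then have S1: "S \<subseteq> P" "card S = r" and mono: "\<And>x y. x \<in> S \<Longrightarrow> y \<in> S \<Longrightarrow> x \<noteq> y \<Longrightarrow> c {x,y} = i"
      and ab: "\<not> (a \<in> S \<and> b \<notin> S)" unfolding clq_def by auto
    have "\<And>x y. x \<in> S \<Longrightarrow> y \<in> S \<Longrightarrow> x \<noteq> y \<Longrightarrow> ?c' {x,y} = i"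
    proof -
      fix x y assume xy: "x \<in> S" "y \<in> S" "x \<noteq> y"
      have xP: "x \<in> P" "y \<in> P" using xy S1 by auto
      show "?c' {x,y} = i"
      proof (cases "x = a \<and> y \<noteq> b")
        case True
        then have "b \<in> S" using ab xy by auto
        then have "c {b,y} = i" using mono xy True by auto
        then show ?thesis using cp_pair[OF xP xy(3) P(4), of c] True by simp
      next
        case F1: False
        show ?thesis
        proof (cases "y = a \<and> x \<noteq> b")
          case True
          then have "b \<in> S" using ab xy by auto
          then have "c {b,x} = i" using mono xy True by auto
          then show ?thesis using cp_pair[OF xP xy(3) P(4), of c] True F1 by simp
        next
          case False
          have "?c' {x,y} = c {x,y}" using cp_pair[OF xP xy(3) P(4), of c] F1 False by metis
          then show ?thesis using mono[OF xy] by simp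
        qed
      qed
    qed
    then show "S \<in> {S\<in>?F'. \<not> (a \<in> S \<and> b \<notin> S)}" using S1 ab unfolding clq_def by auto
  qed
  have hB: "\<And>S. S \<in> ?A' \<Longrightarrow> ?h S \<in> ?B"
  proof -
    fix S assume S: "S \<in> ?A'"
    then have S1: "S \<subseteq> P" "card S = r" and mono: "\<And>x y. x \<in> S \<Longrightarrow> y \<in> S \<Longrightarrow> x \<noteq> y \<Longrightarrow> ?c' {x,y} = i"
      and ab: "a \<in> S" "b \<notin> S" unfolding clq_def by auto
    have finS: "finite S" using S1 P finite_subset by blast
    have "\<And>x y. x \<in> ?h S \<Longrightarrow> y \<in> ?h S \<Longrightarrow> x \<noteq> y \<Longrightarrow> c {x,y} = i"
    proof -
      fix x y assume xy: "x \<in> ?h S" "y \<in> ?h S" "x \<noteq> y"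
      show "c {x,y} = i"
      proof (cases "x = b")
        case True
        then have y: "y \<in> S" "y \<noteq> a" "y \<noteq> b" using xy by auto
        have "?c' {a,y} = c {b,y}" using cp_pair[OF _ _ _ P(4), of a P y c] y S1 ab P by auto
        then show ?thesis using mono[OF ab(1) y(1)] y True by auto
      next
        case F1: False
        show ?thesis
        proof (cases "y = b")
          case True
          then have x: "x \<in> S" "x \<noteq> a" "x \<noteq> b" using xy F1 by auto
          have "?c' {a,x} = c {b,x}" using cp_pair[OF _ _ _ P(4), of a P x c] x S1 ab P by auto
          then show ?thesis using mono[OF ab(1) x(1)] x True by (auto simp: insert_commute)
        next
          case False
          then have x: "x \<in> S" "x \<noteq> a" "y \<in> S" "y \<noteq> a" using xy F1 by auto
          have "?c' {x,y} = c {x,y}" using cp_pair[OF _ _ _ P(4), of x P y c] x S1 xy(3) by auto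
          then show ?thesis using mono[OF x(1) x(3) xy(3)] by simp
        qed
      qed
    qed
    moreover have "?h S \<subseteq> P" using S1 P by auto
    moreover have "card (?h S) = r"
    proof -
      have "0 < card S" using finS ab by (auto simp: card_gt_0_iff)
      then show ?thesis using finS ab S1 by (simp add: card_Diff_singleton)
    qed
    ultimately show "?h S \<in> ?B" using ab P(4) unfolding clq_def by auto
  qed
  have hinj: "inj_on ?h ?A'"
  proof (rule inj_onI)
    fix S T assume S: "S \<in> ?A'" and T: "T \<in> ?A'" and e: "?h S = ?h T"
    have "S = insert a (?h S - {b})" using S P(4) by auto
    also have "\<dots> = insert a (?h T - {b})" using e by simp
    also have "\<dots> = T" using T P(4) by auto
    finally show "S = T" .
  qed
  have himg: "?h ` ?A' = ?B"
  proof
    show "?h ` ?A' \<subseteq> ?B" using hB by blast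
    show "?B \<subseteq> ?h ` ?A'"
    proof
      fix T assume T: "T \<in> ?B"
      then have T1: "T \<subseteq> P" "card T = r" and mono: "\<And>x y. x \<in> T \<Longrightarrow> y \<in> T \<Longrightarrow> x \<noteq> y \<Longrightarrow> c {x,y} = i"
        and ab: "a \<notin> T" "b \<in> T" unfolding clq_def by auto
      have finT: "finite T" using T1 P finite_subset by blast
      let ?S = "insert a (T - {b})"
      have mono': "\<And>x y. x \<in> ?S \<Longrightarrow> y \<in> ?S \<Longrightarrow> x \<noteq> y \<Longrightarrow> ?c' {x,y} = i"
      proof -
        fix x y assume xy: "x \<in> ?S" "y \<in> ?S" "x \<noteq> y"
        have xP: "x \<in> P" "y \<in> P" using xy T1 P by auto
        show "?c' {x,y} = i"
        proof (cases "x = a")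
          case True
          then have y: "y \<in> T" "y \<noteq> b" "y \<noteq> a" using xy by auto
          then show ?thesis using cp_pair[OF xP xy(3) P(4), of c] True mono[OF ab(2) y(1)] by auto
        next
          case F1: False
          show ?thesis
          proof (cases "y = a")
            case True
            then have x: "x \<in> T" "x \<noteq> b" using xy F1 by auto
            then show ?thesis using cp_pair[OF xP xy(3) P(4), of c] True F1 mono[OF ab(2) x(1)] by auto
          next
            case False
            then have "x \<in> T" "y \<in> T" using xy F1 by auto
            then show ?thesis using cp_pair[OF xP xy(3) P(4), of c] False F1 mono xy(3) by auto
          qed
        qed
      qed
      have subP: "?S \<subseteq> P" using T1 P by auto
      have cardS: "card ?S = r"
      proof -
        have "0 < card T" using finT ab by (auto simp: card_gt_0_iff)
        then show ?thesis using finT ab T1 by (simp add: card_Diff_singleton)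
      qed
      have m: "\<forall>x\<in>?S. \<forall>y\<in>?S. x \<noteq> y \<longrightarrow> {x,y} \<in> UNIV \<and> ?c' {x,y} = i" using mono' by blast
      have "?S \<in> ?F'" unfolding clq_def using m subP cardS by blast
      moreover have "a \<in> ?S" by simp
      moreover have "b \<notin> ?S" using P(4) by simp
      ultimately have inA: "?S \<in> ?A'" by (intro CollectI conjI)
      have hS: "?h ?S = T"
      proof -
        have "insert a (T - {b}) - {a} = T - {b}" using ab by blast
        then show ?thesis using ab by (simp add: insert_absorb)
      qed
      show "T \<in> ?h ` ?A'" by (rule image_eqI[where f="?h", OF hS[symmetric] inA])
    qed
  qed
  have wt: "\<And>S. S \<in> ?A' \<Longrightarrow> s b * prod s S = s a * prod s (?h S)"
  proof -
    fix S assume S: "S \<in> ?A'"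
    then have S1: "S \<subseteq> P" "a \<in> S" "b \<notin> S" unfolding clq_def by blast+
    have finS: "finite S" using S1 P finite_subset by blast
    have "prod s S = s a * prod s (S - {a})" by (rule prod.remove[OF finS S1(2)])
    moreover have "prod s (?h S) = s b * prod s (S - {a})" using finS S1 by simp
    ultimately show "s b * prod s S = s a * prod s (?h S)" by (simp add: mult.left_commute)
  qed
  have bij: "s b * (\<Sum>S\<in>?A'. prod s S) = s a * (\<Sum>S\<in>?B. prod s S)"
  proof -
    have "s b * (\<Sum>S\<in>?A'. prod s S) = (\<Sum>S\<in>?A'. s b * prod s S)" by (rule sum_distrib_left)
    also have "\<dots> = (\<Sum>S\<in>?A'. s a * prod s (?h S))" by (rule sum.cong) (simp_all add: wt)
    also have "\<dots> = s a * (\<Sum>S\<in>?A'. prod s (?h S))" by (rule sum_distrib_left[symmetric])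
    also have "(\<Sum>S\<in>?A'. prod s (?h S)) = (\<Sum>S\<in>?h ` ?A'. prod s S)"
      using sum.reindex[OF hinj, of "prod s"] by (simp add: o_def)
    finally show ?thesis using himg by simp
  qed
  have "(\<Sum>S\<in>?F'. prod s S) = (\<Sum>S\<in>?A'. prod s S) + (\<Sum>S\<in>{S\<in>?F'. \<not> (a \<in> S \<and> b \<notin> S)}. prod s S)"
    by (rule sum_split[OF finF(2)])
  moreover have "(\<Sum>S\<in>{S\<in>?F. \<not> (a \<in> S \<and> b \<notin> S)}. prod s S) \<le> (\<Sum>S\<in>{S\<in>?F'. \<not> (a \<in> S \<and> b \<notin> S)}. prod s S)"
    using sub finF(2) by (intro sum_mono2) auto
  ultimately show ?thesis using bij by (simp add: algebra_simps)
qed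

lemma freedom_color:
  fixes s :: "nat \<Rightarrow> nat"
  assumes P: "finite P" "a \<in> P" "b \<in> P" "a \<noteq> b"
  shows "(s a + s b) * (\<Sum>S\<in>clq UNIV c i r P. prod s S) \<le>
     s b * (\<Sum>S\<in>clq UNIV (cp P a b c) i r P. prod s S) + s a * (\<Sum>S\<in>clq UNIV (cp P b a c) i r P. prod s S)"
proof -
  let ?F = "clq UNIV c i r P"
  have finF: "finite ?F" by (rule finite_clq[OF P(1)])
  define N1 where "N1 = (\<Sum>S\<in>{S\<in>?F. \<not> (a \<in> S \<and> b \<notin> S)}. prod s S)"
  define N2 where "N2 = (\<Sum>S\<in>{S\<in>?F. \<not> (b \<in> S \<and> a \<notin> S)}. prod s S)"
  define B1 where "B1 = (\<Sum>S\<in>{S\<in>?F. a \<notin> S \<and> b \<in> S}. prod s S)"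
  define B2 where "B2 = (\<Sum>S\<in>{S\<in>?F. b \<notin> S \<and> a \<in> S}. prod s S)"
  have h1: "s b * (\<Sum>S\<in>clq UNIV (cp P a b c) i r P. prod s S) \<ge> s b * N1 + s a * B1"
    unfolding N1_def B1_def by (rule half[OF P])
  have h2: "s a * (\<Sum>S\<in>clq UNIV (cp P b a c) i r P. prod s S) \<ge> s a * N2 + s b * B2"
    unfolding N2_def B2_def by (rule half[OF P(1,3,2) P(4)[symmetric]])
  have e1: "{S\<in>?F. b \<notin> S \<and> a \<in> S} = {S\<in>?F. a \<in> S \<and> b \<notin> S}" by blast
  have e2: "{S\<in>?F. a \<notin> S \<and> b \<in> S} = {S\<in>?F. b \<in> S \<and> a \<notin> S}" by blast
  have s1: "(\<Sum>S\<in>?F. prod s S) = B2 + N1"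
    unfolding B2_def N1_def e1 by (rule sum_split[OF finF])
  have s2: "(\<Sum>S\<in>?F. prod s S) = B1 + N2"
    unfolding B1_def N2_def e2 by (rule sum_split[OF finF])
  have "(s a + s b) * (\<Sum>S\<in>?F. prod s S) = s b * (B2 + N1) + s a * (B1 + N2)"
    using s1 s2 by (simp add: algebra_simps)
  also have "\<dots> = (s b * N1 + s a * B1) + (s a * N2 + s b * B2)" by (simp add: algebra_simps)
  finally show ?thesis using h1 h2 by linarith
qed

lemma freedom:
  fixes s :: "nat \<Rightarrow> nat"
  assumes P: "finite P" "a \<in> P" "b \<in> P" "a \<noteq> b"
  shows "(s a + s b) * Phi k r UNIV c s P \<le> s b * Phi k r UNIV (cp P a b c) s P + s a * Phi k r UNIV (cp P b a c) s P"
proof -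
  have "(s a + s b) * Phi k r UNIV c s P = (\<Sum>i=1..k. (s a + s b) * (\<Sum>S\<in>clq UNIV c i (r i) P. prod s S))"
    unfolding Phi_def by (rule sum_distrib_left)
  also have "\<dots> \<le> (\<Sum>i=1..k. s b * (\<Sum>S\<in>clq UNIV (cp P a b c) i (r i) P. prod s S) + s a * (\<Sum>S\<in>clq UNIV (cp P b a c) i (r i) P. prod s S))"
    by (rule sum_mono) (rule freedom_color[OF P])
  also have "\<dots> = s b * Phi k r UNIV (cp P a b c) s P + s a * Phi k r UNIV (cp P b a c) s P"
    unfolding Phi_def by (simp add: sum.distrib sum_distrib_left)
  finally show ?thesis .
qed

definition CP :: "nat \<Rightarrow> nat set \<Rightarrow> (nat set \<Rightarrow> nat) set" where
  "CP k P = {c. \<forall>e. (e \<in> EP P \<longrightarrow> c e \<in> {1..k}) \<and> (e \<notin> EP P \<longrightarrow> c e = 0)}"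

lemma finite_EP: "finite P \<Longrightarrow> finite (EP P)"
  unfolding EP_def by (rule finite_subset[OF _ finite_Pow_iff[THEN iffD2]]) auto

lemma finite_CP: "finite P \<Longrightarrow> finite (CP k P)"
  unfolding CP_def by (rule finite_set_of_finite_funs) (auto intro: finite_EP)

lemma ex_max_nat:
  fixes f :: "'a \<Rightarrow> nat"
  assumes "finite X" "X \<noteq> {}"
  shows "\<exists>x\<in>X. \<forall>y\<in>X. f y \<le> f x"
proof -
  have "Max (f ` X) \<in> f ` X" using assms by simp
  then obtain x where x: "x \<in> X" "f x = Max (f ` X)" by auto
  have "\<forall>y\<in>X. f y \<le> f x" using x assms by simp
  then show ?thesis using x by blast
qed

lemma EP_pair: "e \<in> EP P \<Longrightarrow> \<exists>x y. e = {x,y} \<and> x \<noteq> y \<and> x \<in> P \<and> y \<in> P"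
  unfolding EP_def by (auto simp: card_2_iff)

lemma cp_mem:
  assumes "c \<in> CP k P" "a \<in> P" "b \<in> P" "a \<noteq> b"
  shows "cp P a b c \<in> CP k P"
proof -
  have "\<And>e. e \<in> EP P \<Longrightarrow> cp P a b c e \<in> {1..k}"
  proof -
    fix e assume e: "e \<in> EP P"
    show "cp P a b c e \<in> {1..k}"
    proof (cases "a \<in> e \<and> b \<notin> e")
      case True
      obtain x y where xy: "e = {x,y}" "x \<noteq> y" "x \<in> P" "y \<in> P" using EP_pair[OF e] by blast
      have "insert b (e - {a}) \<in> EP P"
      proof (cases "x = a")
        case True
        then have "insert b (e - {a}) = {b,y}" using xy by auto
        moreover have "b \<noteq> y" using \<open>a \<in> e \<and> b \<notin> e\<close> xy by auto
        ultimately show ?thesis using pair_EP[OF assms(3) xy(4)] by simp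
      next
        case False
        then have "y = a" using True xy by auto
        then have "insert b (e - {a}) = {b,x}" using xy by auto
        moreover have "b \<noteq> x" using \<open>a \<in> e \<and> b \<notin> e\<close> xy by auto
        ultimately show ?thesis using pair_EP[OF assms(3) xy(3)] by simp
      qed
      moreover have "cp P a b c e = c (insert b (e - {a}))" unfolding cp_def
        by (simp only: if_P[OF e] if_P[OF True])
      ultimately show ?thesis using assms(1) unfolding CP_def by simp
    next
      case False
      have "cp P a b c e = c e" unfolding cp_def
        by (simp only: if_P[OF e] if_not_P[OF False])
      then show ?thesis using e assms(1) unfolding CP_def by simp
    qed
  qed
  moreover have "\<And>e. e \<notin> EP P \<Longrightarrow> cp P a b c e = 0" unfolding cp_def by simp
  ultimately show ?thesis unfolding CP_def by blast
qed

lemma clq_cong: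
  assumes "\<forall>x\<in>A. \<forall>y\<in>A. x \<noteq> y \<longrightarrow> c {x,y} = c' {x,y}"
  shows "clq E c i r A = clq E c' i r A"
proof -
  have *: "\<And>S c c'. \<forall>x\<in>A. \<forall>y\<in>A. x \<noteq> y \<longrightarrow> c {x,y} = c' {x,y} \<Longrightarrow> S \<in> clq E c i r A \<Longrightarrow> S \<in> clq E c' i r A"
  proof -
    fix S and c c' :: "nat set \<Rightarrow> nat"
    assume h: "\<forall>x\<in>A. \<forall>y\<in>A. x \<noteq> y \<longrightarrow> c {x,y} = c' {x,y}" and S: "S \<in> clq E c i r A"
    have S1: "S \<subseteq> A" "card S = r" and m: "\<forall>x\<in>S. \<forall>y\<in>S. x \<noteq> y \<longrightarrow> {x,y} \<in> E \<and> c {x,y} = i"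
      using S unfolding clq_def by blast+
    have "\<forall>x\<in>S. \<forall>y\<in>S. x \<noteq> y \<longrightarrow> {x,y} \<in> E \<and> c' {x,y} = i"
    proof (intro ballI impI)
      fix x y assume xy: "x \<in> S" "y \<in> S" "x \<noteq> y"
      have "c {x,y} = c' {x,y}" using h xy S1 by blast
      then show "{x,y} \<in> E \<and> c' {x,y} = i" using m xy by metis
    qed
    then show "S \<in> clq E c' i r A" using S1 unfolding clq_def by blast
  qed
  have sym: "\<forall>x\<in>A. \<forall>y\<in>A. x \<noteq> y \<longrightarrow> c' {x,y} = c {x,y}" using assms by metis
  show ?thesis using *[OF assms] *[OF sym] by blast
qed

lemma Phi_cong:
  assumes "\<forall>x\<in>A. \<forall>y\<in>A. x \<noteq> y \<longrightarrow> c {x,y} = c' {x,y}"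
  shows "Phi k r E c s A = Phi k r E c' s A"
  unfolding Phi_def using clq_cong[OF assms] by simp

lemma two_elems: "finite P \<Longrightarrow> 2 \<le> card P \<Longrightarrow> \<exists>x y. x \<in> P \<and> y \<in> P \<and> x \<noteq> y"
proof -
  assume f: "finite P" and c: "2 \<le> card P"
  have "P \<noteq> {}" using c by (metis card.empty not_numeral_le_zero)
  then obtain x where x: "x \<in> P" by blast
  have "card (P - {x}) = card P - 1" using x f by (simp add: card_Diff_singleton)
  then have "1 \<le> card (P - {x})" using c by simp
  then have "P - {x} \<noteq> {}" by (metis card.empty not_one_le_zero)
  then obtain y where "y \<in> P - {x}" by blast
  then show ?thesis using x by blast
qed

lemma keep_max:
  fixes s :: "nat \<Rightarrow> nat"
  assumes P: "finite P" "a \<in> P" "b \<in> P" "a \<noteq> b" and pos: "0 < s b"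
    and c: "c \<in> CP k P" and M: "Phi k r UNIV c s P = Max ((\<lambda>c. Phi k r UNIV c s P) ` CP k P)"
  shows "Phi k r UNIV (cp P a b c) s P = Max ((\<lambda>c. Phi k r UNIV c s P) ` CP k P)"
proof -
  let ?M = "Max ((\<lambda>c. Phi k r UNIV c s P) ` CP k P)"
  have fin: "finite ((\<lambda>c. Phi k r UNIV c s P) ` CP k P)" using finite_CP[OF P(1)] by simp
  have m1: "cp P a b c \<in> CP k P" by (rule cp_mem[OF c P(2,3,4)])
  have m2: "cp P b a c \<in> CP k P" by (rule cp_mem[OF c P(3,2) P(4)[symmetric]])
  have le1: "Phi k r UNIV (cp P a b c) s P \<le> ?M" using fin m1 by (intro Max_ge) auto
  have le2: "Phi k r UNIV (cp P b a c) s P \<le> ?M" using fin m2 by (intro Max_ge) auto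
  have fr: "(s a + s b) * ?M \<le> s b * Phi k r UNIV (cp P a b c) s P + s a * Phi k r UNIV (cp P b a c) s P"
    using freedom[OF P, of s k r c] M by simp
  define X where "X = Phi k r UNIV (cp P a b c) s P"
  define Y where "Y = Phi k r UNIV (cp P b a c) s P"
  define Mv where "Mv = ?M"
  have fr': "s a * Mv + s b * Mv \<le> s b * X + s a * Y" using fr unfolding X_def Y_def Mv_def
    by (simp add: distrib_right)
  have "s a * Y \<le> s a * Mv" using le2 unfolding Y_def Mv_def by (rule mult_left_mono) simp
  then have "s b * Mv \<le> s b * X" using fr' by linarith
  then have "Mv \<le> X" using pos by (simp add: mult_le_cancel1)
  then show ?thesis using le1 unfolding X_def Mv_def by simp
qed

lemma stepB:
  fixes s :: "nat \<Rightarrow> nat"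
  assumes P: "finite P" and pos: "\<forall>x\<in>P. 0 < s x" and k: "1 \<le> k" and r: "\<forall>i\<in>{1..k}. 2 \<le> r i"
    and col: "\<forall>x\<in>P. \<forall>y\<in>P. x \<noteq> y \<longrightarrow> c {x,y} \<in> {1..k}"
  shows "\<exists>g\<in>{1..k}. Phi k r UNIV c s P \<le> esym P s (r g)"
proof (cases "card P < 2")
  case True
  have "\<And>i. i \<in> {1..k} \<Longrightarrow> clq UNIV c i (r i) P = {}"
  proof -
    fix i assume i: "i \<in> {1..k}"
    show "clq UNIV c i (r i) P = {}"
    proof (rule ccontr)
      assume "clq UNIV c i (r i) P \<noteq> {}"
      then obtain S where "S \<subseteq> P" "card S = r i" unfolding clq_def by blast
      then have "r i \<le> card P" using card_mono[OF P] by metis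
      then show False using True r i by fastforce
    qed
  qed
  then have "Phi k r UNIV c s P = 0" unfolding Phi_def by simp
  then show ?thesis using k by (intro bexI[of _ 1]) auto
next
  case False
  then obtain a0 a1 where a: "a0 \<in> P" "a1 \<in> P" "a0 \<noteq> a1" using two_elems[OF P] by force
  let ?Psi = "\<lambda>c. Phi k r UNIV c s P"
  let ?C = "CP k P"
  let ?M = "Max (?Psi ` ?C)"
  have finC: "finite ?C" by (rule finite_CP[OF P])
  define c0 where "c0 = (\<lambda>e. if e \<in> EP P then c e else 0)"
  have c0C: "c0 \<in> ?C"
  proof -
    have "\<And>e. e \<in> EP P \<Longrightarrow> c e \<in> {1..k}"
    proof -
      fix e assume "e \<in> EP P"
      then obtain x y where "e = {x,y}" "x \<noteq> y" "x \<in> P" "y \<in> P" using EP_pair by blast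
      then show "c e \<in> {1..k}" using col by blast
    qed
    then show ?thesis unfolding CP_def c0_def by simp
  qed
  have Psi0: "?Psi c = ?Psi c0"
    by (rule Phi_cong) (auto simp: c0_def intro: pair_EP)
  have Cne: "?C \<noteq> {}" using c0C by blast
  define G1 where "G1 = {c\<in>?C. ?Psi c = ?M}"
  have finG1: "finite G1" using finC unfolding G1_def by simp
  have "?M \<in> ?Psi ` ?C" using finC Cne by simp
  then have G1ne: "G1 \<noteq> {}" unfolding G1_def by force
  have keep: "\<And>c a b. c \<in> G1 \<Longrightarrow> a \<in> P \<Longrightarrow> b \<in> P \<Longrightarrow> a \<noteq> b \<Longrightarrow> cp P a b c \<in> G1"
  proof -
    fix c a b assume c: "c \<in> G1" and ab: "a \<in> P" "b \<in> P" "a \<noteq> b"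
    have "?Psi (cp P a b c) = ?M"
      using keep_max[OF P ab _] pos ab c unfolding G1_def by blast
    moreover have "cp P a b c \<in> ?C" using cp_mem ab c unfolding G1_def by blast
    ultimately show "cp P a b c \<in> G1" unfolding G1_def by blast
  qed
  define N1 where "N1 = (\<lambda>c::nat set \<Rightarrow> nat. card {y\<in>P - {a1}. c {a1,y} = c {a0,a1}})"
  obtain c1 where c1: "c1 \<in> G1" and c1max: "\<forall>c\<in>G1. N1 c \<le> N1 c1"
    using ex_max_nat[OF finG1 G1ne, of N1] by blast
  have claim1: "\<forall>y\<in>P - {a1}. c1 {a1,y} = c1 {a0,a1}"
  proof (rule ccontr)
    assume "\<not> (\<forall>y\<in>P - {a1}. c1 {a1,y} = c1 {a0,a1})"
    then obtain y where y: "y \<in> P" "y \<noteq> a1" "c1 {a1,y} \<noteq> c1 {a0,a1}" by blast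
    have ya0: "y \<noteq> a0" using y by (auto simp: insert_commute)
    let ?c' = "cp P y a0 c1"
    have c'G: "?c' \<in> G1" by (rule keep[OF c1 y(1) a(1) ya0])
    have e01: "?c' {a0,a1} = c1 {a0,a1}"
      using cp_pair[OF a(1,2,3) ya0, of c1] ya0 y(2) by simp
    have sub: "{z\<in>P - {a1}. c1 {a1,z} = c1 {a0,a1}} \<subseteq> {z\<in>P - {a1}. ?c' {a1,z} = ?c' {a0,a1}}"
    proof
      fix z assume z: "z \<in> {z\<in>P - {a1}. c1 {a1,z} = c1 {a0,a1}}"
      then have zz: "z \<in> P" "z \<noteq> a1" "c1 {a1,z} = c1 {a0,a1}" by auto
      have "z \<noteq> y" using zz y by auto
      then have "?c' {a1,z} = c1 {a1,z}"
        using cp_pair[OF a(2) zz(1) zz(2)[symmetric] ya0, of c1] y(2) by simp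
      then show "z \<in> {z\<in>P - {a1}. ?c' {a1,z} = ?c' {a0,a1}}" using zz e01 by simp
    qed
    have yin: "y \<in> {z\<in>P - {a1}. ?c' {a1,z} = ?c' {a0,a1}}"
    proof -
      have "?c' {a1,y} = c1 {a0,a1}"
        using cp_pair[OF a(2) y(1) y(2)[symmetric] ya0, of c1] y(2) a(3) by (simp add: eq_commute)
      then show ?thesis using y e01 by simp
    qed
    have ynot: "y \<notin> {z\<in>P - {a1}. c1 {a1,z} = c1 {a0,a1}}" using y by simp
    have "N1 c1 < N1 ?c'" unfolding N1_def
      by (rule psubset_card_mono) (use P sub yin ynot in auto)
    then show False using c1max c'G by fastforce
  qed
  define g where "g = c1 {a0,a1}"
  have gk: "g \<in> {1..k}"
  proof -
    have "c1 \<in> ?C" using c1 unfolding G1_def by blast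
    then show ?thesis unfolding g_def CP_def using pair_EP[OF a] by blast
  qed
  define G2 where "G2 = {c\<in>G1. \<forall>y\<in>P - {a1}. c {a1,y} = g}"
  have c1G2: "c1 \<in> G2" unfolding G2_def g_def using c1 claim1 by blast
  have finG2: "finite G2" using finG1 unfolding G2_def by simp
  define N2 where "N2 = (\<lambda>c::nat set \<Rightarrow> nat. card {e\<in>EP P. c e = g})"
  obtain c2 where c2: "c2 \<in> G2" and c2max: "\<forall>c\<in>G2. N2 c \<le> N2 c2"
    using ex_max_nat[OF finG2, of N2] c1G2 by blast
  have c2a1: "\<And>y. y \<in> P \<Longrightarrow> y \<noteq> a1 \<Longrightarrow> c2 {a1,y} = g" using c2 unfolding G2_def by blast
  have claim2: "\<forall>e\<in>EP P. c2 e = g"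
  proof (rule ccontr)
    assume "\<not> (\<forall>e\<in>EP P. c2 e = g)"
    then obtain e where e: "e \<in> EP P" "c2 e \<noteq> g" by blast
    then obtain x y where xy: "e = {x,y}" "x \<noteq> y" "x \<in> P" "y \<in> P" using EP_pair by blast
    have xa1: "x \<noteq> a1" using c2a1[OF xy(4)] e xy by auto
    have ya1: "y \<noteq> a1" using c2a1[OF xy(3)] e xy by (auto simp: insert_commute)
    let ?c' = "cp P x a1 c2"
    have c'G1: "?c' \<in> G1" by (rule keep[OF _ xy(3) a(2) xa1]) (use c2 G2_def in blast)
    have c'a1: "\<And>z. z \<in> P \<Longrightarrow> z \<noteq> a1 \<Longrightarrow> ?c' {a1,z} = g"
    proof -
      fix z assume z: "z \<in> P" "z \<noteq> a1"
      have "?c' {a1,z} = c2 {a1,z}"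
        using cp_pair[OF a(2) z(1) z(2)[symmetric] xa1, of c2] xa1 by auto
      then show "?c' {a1,z} = g" using c2a1[OF z] by simp
    qed
    have c'G2: "?c' \<in> G2" unfolding G2_def using c'G1 c'a1 by blast
    have sub: "{e\<in>EP P. c2 e = g} \<subseteq> {e\<in>EP P. ?c' e = g}"
    proof
      fix e' assume e': "e' \<in> {e\<in>EP P. c2 e = g}"
      then obtain u v where uv: "e' = {u,v}" "u \<noteq> v" "u \<in> P" "v \<in> P" using EP_pair by blast
      have "?c' {u,v} = g"
      proof (cases "u = x \<and> v \<noteq> a1")
        case True
        then show ?thesis using cp_pair[OF uv(3,4,2) xa1, of c2] c2a1[OF uv(4)] by simp
      next
        case F1: False
        show ?thesis
        proof (cases "v = x \<and> u \<noteq> a1")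
          case True
          then show ?thesis using cp_pair[OF uv(3,4,2) xa1, of c2] c2a1[OF uv(3)] F1 by simp
        next
          case False
          have "?c' {u,v} = c2 {u,v}" using cp_pair[OF uv(3,4,2) xa1, of c2] F1 False by metis
          then show ?thesis using e' uv by simp
        qed
      qed
      then show "e' \<in> {e\<in>EP P. ?c' e = g}" using e' uv by simp
    qed
    have ein: "e \<in> {e\<in>EP P. ?c' e = g}"
    proof -
      have "?c' {x,y} = c2 {a1,y}" using cp_pair[OF xy(3,4,2) xa1, of c2] ya1 by simp
      then show ?thesis using c2a1[OF xy(4) ya1] e xy by simp
    qed
    have enot: "e \<notin> {e\<in>EP P. c2 e = g}" using e by simp
    have finEP: "finite (EP P)" by (rule finite_EP[OF P])
    have "N2 c2 < N2 ?c'" unfolding N2_def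
      by (rule psubset_card_mono) (use finEP sub ein enot in auto)
    then show False using c2max c'G2 by fastforce
  qed
  have c2C: "c2 \<in> ?C" and c2M: "?Psi c2 = ?M" using c2 unfolding G2_def G1_def by blast+
  have clqs: "\<And>i. i \<in> {1..k} \<Longrightarrow> clq UNIV c2 i (r i) P = (if i = g then {S. S \<subseteq> P \<and> card S = r g} else {})"
  proof -
    fix i assume i: "i \<in> {1..k}"
    show "clq UNIV c2 i (r i) P = (if i = g then {S. S \<subseteq> P \<and> card S = r g} else {})"
    proof (cases "i = g")
      case True
      have "\<And>S. S \<subseteq> P \<Longrightarrow> \<forall>x\<in>S. \<forall>y\<in>S. x \<noteq> y \<longrightarrow> {x,y} \<in> UNIV \<and> c2 {x,y} = g"
      proof -
        fix S assume S: "S \<subseteq> P"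
        show "\<forall>x\<in>S. \<forall>y\<in>S. x \<noteq> y \<longrightarrow> {x,y} \<in> UNIV \<and> c2 {x,y} = g"
        proof (intro ballI impI conjI)
          fix x y assume "x \<in> S" "y \<in> S" "x \<noteq> y"
          then have "{x,y} \<in> EP P" using S by (intro pair_EP) auto
          then show "c2 {x,y} = g" using claim2 by blast
        qed simp
      qed
      then show ?thesis using True unfolding clq_def by auto
    next
      case False
      have "clq UNIV c2 i (r i) P = {}"
      proof (rule ccontr)
        assume "clq UNIV c2 i (r i) P \<noteq> {}"
        then obtain S where S: "S \<subseteq> P" "card S = r i" "\<forall>x\<in>S. \<forall>y\<in>S. x \<noteq> y \<longrightarrow> {x,y} \<in> UNIV \<and> c2 {x,y} = i"
          unfolding clq_def by blast
        have finS: "finite S" using S(1) P finite_subset by blast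
        have "2 \<le> card S" using S(2) r i by simp
        then obtain x y where xy: "x \<in> S" "y \<in> S" "x \<noteq> y" using two_elems[OF finS] by blast
        have "c2 {x,y} = i" using S(3) xy by blast
        moreover have "{x,y} \<in> EP P" using S(1) xy by (intro pair_EP) auto
        ultimately show False using claim2 False by auto
      qed
      then show ?thesis using False by simp
    qed
  qed
  have "?Psi c2 = (\<Sum>i=1..k. if i = g then esym P s (r g) else 0)"
    unfolding Phi_def esym_def by (rule sum.cong) (simp_all add: clqs)
  also have "\<dots> = esym P s (r g)" using gk by simp
  finally have "?Psi c2 = esym P s (r g)" .
  moreover have "?Psi c0 \<le> ?M" using finC c0C by (intro Max_ge) auto
  ultimately show ?thesis using Psi0 c2M gk by auto
qed

lemma ex_min_nat:
  fixes f :: "'a \<Rightarrow> nat"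
  assumes "finite X" "X \<noteq> {}"
  shows "\<exists>x\<in>X. \<forall>y\<in>X. f x \<le> f y"
proof -
  have "Min (f ` X) \<in> f ` X" using assms by simp
  then obtain x where x: "x \<in> X" "f x = Min (f ` X)" by auto
  have "\<forall>y\<in>X. f x \<le> f y" using x assms by simp
  then show ?thesis using x by blast
qed

lemma sum_upd2:
  fixes f :: "nat \<Rightarrow> nat"
  assumes "finite A" "u \<in> A" "v \<in> A" "u \<noteq> v" "a + b = f u + f v"
  shows "sum (f(u := a, v := b)) A = sum f A"
proof -
  let ?g = "f(u := a, v := b)"
  have r1: "sum ?g A = ?g u + sum ?g (A - {u})" by (rule sum.remove[OF assms(1,2)])
  have r2: "sum ?g (A - {u}) = ?g v + sum ?g (A - {u} - {v})"
    by (rule sum.remove) (use assms in auto)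
  have r3: "sum f A = f u + sum f (A - {u})" by (rule sum.remove[OF assms(1,2)])
  have r4: "sum f (A - {u}) = f v + sum f (A - {u} - {v})"
    by (rule sum.remove) (use assms in auto)
  have r5: "sum ?g (A - {u} - {v}) = sum f (A - {u} - {v})" by (rule sum.cong) auto
  have "?g u = a" "?g v = b" using assms(4) by auto
  then show ?thesis using r1 r2 r3 r4 r5 assms(5) by linarith
qed

lemma merge_pointwise:
  fixes s :: "nat \<Rightarrow> nat"
  assumes "finite S" "\<not> (u \<in> S \<and> v \<in> S)" "u \<noteq> v"
  shows "s u * prod (s(u := s u + s v, v := 0)) S + s v * prod (s(v := s u + s v, u := 0)) S
         = (s u + s v) * prod s S"
proof -
  let ?s1 = "s(u := s u + s v, v := 0)"
  let ?s2 = "s(v := s u + s v, u := 0)"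
  show ?thesis
  proof (cases "u \<in> S")
    case True
    then have vS: "v \<notin> S" using assms by blast
    have a: "prod ?s1 S = ?s1 u * prod ?s1 (S - {u})" by (rule prod.remove[OF assms(1) True])
    have b: "prod ?s2 S = ?s2 u * prod ?s2 (S - {u})" by (rule prod.remove[OF assms(1) True])
    have c: "prod s S = s u * prod s (S - {u})" by (rule prod.remove[OF assms(1) True])
    have d: "prod ?s1 (S - {u}) = prod s (S - {u})" by (rule prod.cong) (use vS in auto)
    have "?s1 u = s u + s v" "?s2 u = 0" using assms(3) by auto
    then show ?thesis using a b c d by (simp add: algebra_simps)
  next
    case False
    show ?thesis
    proof (cases "v \<in> S")
      case True
      have a: "prod ?s1 S = ?s1 v * prod ?s1 (S - {v})" by (rule prod.remove[OF assms(1) True])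
      have b: "prod ?s2 S = ?s2 v * prod ?s2 (S - {v})" by (rule prod.remove[OF assms(1) True])
      have c: "prod s S = s v * prod s (S - {v})" by (rule prod.remove[OF assms(1) True])
      have d: "prod ?s2 (S - {v}) = prod s (S - {v})" by (rule prod.cong) (use False in auto)
      have "?s1 v = 0" "?s2 v = s u + s v" using assms(3) by auto
      then show ?thesis using a b c d by (simp add: algebra_simps)
    next
      case F2: False
      have "prod ?s1 S = prod s S" by (rule prod.cong) (use False F2 in auto)
      moreover have "prod ?s2 S = prod s S" by (rule prod.cong) (use False F2 in auto)
      ultimately show ?thesis by (simp add: algebra_simps)
    qed
  qed
qed

lemma merge_identity:
  fixes s :: "nat \<Rightarrow> nat"
  assumes "u \<noteq> v" "{u,v} \<notin> E"
  shows "s u * Phi k r E c (s(u := s u + s v, v := 0)) A + s v * Phi k r E c (s(v := s u + s v, u := 0)) A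
         = (s u + s v) * Phi k r E c s A"
proof -
  have pt: "\<And>i S. S \<in> clq E c i (r i) A \<Longrightarrow>
     s u * prod (s(u := s u + s v, v := 0)) S + s v * prod (s(v := s u + s v, u := 0)) S = (s u + s v) * prod s S"
  proof -
    fix i S assume S: "S \<in> clq E c i (r i) A"
    have nuv: "\<not> (u \<in> S \<and> v \<in> S)"
    proof
      assume "u \<in> S \<and> v \<in> S"
      then have "{u,v} \<in> E" using S assms(1) unfolding clq_def by blast
      then show False using assms(2) by blast
    qed
    show "s u * prod (s(u := s u + s v, v := 0)) S + s v * prod (s(v := s u + s v, u := 0)) S = (s u + s v) * prod s S"
    proof (cases "finite S")
      case True then show ?thesis using merge_pointwise[OF True nuv assms(1)] by simp
    next
      case False then show ?thesis by simp
    qed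
  qed
  show ?thesis
    unfolding Phi_def sum_distrib_left sum.distrib[symmetric]
    by (rule sum.cong[OF refl], rule sum.cong[OF refl]) (rule pt)
qed

definition WS :: "nat \<Rightarrow> (nat \<Rightarrow> nat) set" where
  "WS n = {s. (\<forall>x. (x \<in> {..<n} \<longrightarrow> s x \<in> {..n}) \<and> (x \<notin> {..<n} \<longrightarrow> s x = 0)) \<and> sum s {..<n} = n}"

lemma finite_WS: "finite (WS n)"
proof -
  have "finite {s::nat\<Rightarrow>nat. \<forall>x. (x \<in> {..<n} \<longrightarrow> s x \<in> {..n}) \<and> (x \<notin> {..<n} \<longrightarrow> s x = 0)}"
    by (rule finite_set_of_finite_funs) auto
  then show ?thesis unfolding WS_def by (rule finite_subset[rotated]) blast
qed

lemma stepA: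
  fixes n :: nat
  defines "s0 \<equiv> (\<lambda>x. if x < n then 1 else 0)"
  shows "\<exists>s\<in>WS n. Phi k r E c s0 {..<n} \<le> Phi k r E c s {..<n} \<and>
           (\<forall>x<n. \<forall>y<n. x \<noteq> y \<longrightarrow> 0 < s x \<longrightarrow> 0 < s y \<longrightarrow> {x,y} \<in> E)"
proof -
  let ?F = "\<lambda>s. Phi k r E c s {..<n}"
  let ?M = "Max (?F ` WS n)"
  have s0W: "s0 \<in> WS n" unfolding WS_def s0_def by auto
  have fin: "finite (?F ` WS n)" using finite_WS by simp
  have "?M \<in> ?F ` WS n" using fin s0W by (intro Max_in) auto
  define G where "G = {s\<in>WS n. ?F s = ?M}"
  have Gne: "G \<noteq> {}" using \<open>?M \<in> ?F ` WS n\<close> unfolding G_def by force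
  have finG: "finite G" using finite_WS unfolding G_def by simp
  define supp where "supp = (\<lambda>s::nat\<Rightarrow>nat. {x\<in>{..<n}. s x \<noteq> 0})"
  obtain s where sG: "s \<in> G" and smin: "\<forall>t\<in>G. card (supp s) \<le> card (supp t)"
    using ex_min_nat[OF finG Gne, of "\<lambda>s. card (supp s)"] by blast
  have sW: "s \<in> WS n" and sM: "?F s = ?M" using sG unfolding G_def by auto
  have clique: "\<forall>x<n. \<forall>y<n. x \<noteq> y \<longrightarrow> 0 < s x \<longrightarrow> 0 < s y \<longrightarrow> {x,y} \<in> E"
  proof (rule ccontr)
    assume "\<not> ?thesis"
    then obtain u v where uv: "u < n" "v < n" "u \<noteq> v" "0 < s u" "0 < s v" "{u,v} \<notin> E" by blast
    define s1 where "s1 = s(u := s u + s v, v := 0)"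
    define s2 where "s2 = s(v := s u + s v, u := 0)"
    have sumn: "sum s {..<n} = n" using sW unfolding WS_def by blast
    have le: "s u + s v \<le> n"
    proof -
      have "sum s {u,v} \<le> sum s {..<n}" by (rule sum_mono2) (use uv in auto)
      then show ?thesis using uv sumn by simp
    qed
    have s1W: "s1 \<in> WS n"
    proof -
      have "sum s1 {..<n} = sum s {..<n}" unfolding s1_def by (rule sum_upd2) (use uv in auto)
      then show ?thesis using sW le uv unfolding WS_def s1_def by auto
    qed
    have s2W: "s2 \<in> WS n"
    proof -
      have "sum s2 {..<n} = sum s {..<n}" unfolding s2_def by (rule sum_upd2) (use uv in auto)
      then show ?thesis using sW le uv unfolding WS_def s2_def by auto
    qed
    have le1: "?F s1 \<le> ?M" using fin s1W by (intro Max_ge) auto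
    have le2: "?F s2 \<le> ?M" using fin s2W by (intro Max_ge) auto
    have id: "s u * ?F s1 + s v * ?F s2 = (s u + s v) * ?M"
      using merge_identity[OF uv(3,6), of s k r c "{..<n}"] sM unfolding s1_def s2_def by simp
    have "?F s1 = ?M"
    proof (rule ccontr)
      assume "?F s1 \<noteq> ?M"
      then have "?F s1 < ?M" using le1 by simp
      then have "s u * ?F s1 < s u * ?M" using uv(4) by simp
      moreover have "s v * ?F s2 \<le> s v * ?M" using le2 by simp
      ultimately have "s u * ?F s1 + s v * ?F s2 < s u * ?M + s v * ?M" by linarith
      then show False using id by (simp add: distrib_right)
    qed
    then have s1G: "s1 \<in> G" using s1W unfolding G_def by simp
    have "supp s1 = supp s - {v}" unfolding supp_def s1_def using uv by auto
    then have "supp s1 \<subset> supp s" using uv unfolding supp_def by auto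
    then have "card (supp s1) < card (supp s)" by (rule psubset_card_mono[rotated]) (simp add: supp_def)
    then show False using smin s1G by fastforce
  qed
  have "?F s0 \<le> ?M" using fin s0W by (intro Max_ge) auto
  then show ?thesis using sW sM clique by (intro bexI[of _ s]) auto
qed

lemma col_count_Phi:
  "col_count n k r E c = Phi k r E c (\<lambda>x. if x < n then 1 else 0) {..<n}"
  unfolding col_count_def Phi_def
proof (rule sum.cong[OF refl])
  fix i
  have set: "{S. S \<subseteq> {..<n} \<and> card S = r i \<and> (\<forall>x\<in>S. \<forall>y\<in>S. x \<noteq> y \<longrightarrow> {x, y} \<in> {e \<in> E. c e = i})}
      = clq E c i (r i) {..<n}" unfolding clq_def by simp
  have "(\<Sum>S\<in>clq E c i (r i) {..<n}. \<Prod>x\<in>S. (if x < n then 1 else 0)) = (\<Sum>S\<in>clq E c i (r i) {..<n}. (1::nat))"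
  proof (rule sum.cong[OF refl])
    fix S assume "S \<in> clq E c i (r i) {..<n}"
    then have "S \<subseteq> {..<n}" unfolding clq_def by blast
    then show "(\<Prod>x\<in>S. (if x < n then 1 else 0)) = (1::nat)" by (intro prod.neutral) auto
  qed
  then show "num_cliques n (r i) {e \<in> E. c e = i} = (\<Sum>S\<in>clq E c i (r i) {..<n}. \<Prod>x\<in>S. (if x < n then 1 else 0))"
    unfolding num_cliques_def set by simp
qed

lemma upper:
  assumes free: "Km_free n m E" and col: "\<forall>e\<in>E. c e \<in> {1..k}" and m: "2 \<le> m" and k: "1 \<le> k"
    and r: "\<forall>i\<in>{1..k}. 2 \<le> r i"
  shows "\<exists>g\<in>{1..k}. col_count n k r E c \<le> num_cliques n (r g) (turan n (m - 1))"
proof -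
  obtain s where sW: "s \<in> WS n" and sle: "Phi k r E c (\<lambda>x. if x < n then 1 else 0) {..<n} \<le> Phi k r E c s {..<n}"
    and cl: "\<forall>x<n. \<forall>y<n. x \<noteq> y \<longrightarrow> 0 < s x \<longrightarrow> 0 < s y \<longrightarrow> {x,y} \<in> E"
    using stepA[of n k r E c] by blast
  define P where "P = {x\<in>{..<n}. 0 < s x}"
  have Psub: "P \<subseteq> {..<n}" unfolding P_def by blast
  have finP: "finite P" unfolding P_def by simp
  have pos: "\<forall>x\<in>P. 0 < s x" unfolding P_def by blast
  have clP: "\<forall>x\<in>P. \<forall>y\<in>P. x \<noteq> y \<longrightarrow> {x,y} \<in> E" using cl unfolding P_def by blast
  have colP: "\<forall>x\<in>P. \<forall>y\<in>P. x \<noteq> y \<longrightarrow> c {x,y} \<in> {1..k}" using clP col by blast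
  have PhiP: "Phi k r E c s {..<n} = Phi k r UNIV c s P"
    unfolding Phi_def
  proof (rule sum.cong[OF refl])
    fix i
    have sub: "clq UNIV c i (r i) P \<subseteq> clq E c i (r i) {..<n}"
    proof
      fix S assume S: "S \<in> clq UNIV c i (r i) P"
      then have "S \<subseteq> P" unfolding clq_def by blast
      then have "\<forall>x\<in>S. \<forall>y\<in>S. x \<noteq> y \<longrightarrow> {x,y} \<in> E" using clP by blast
      then show "S \<in> clq E c i (r i) {..<n}" using S Psub unfolding clq_def by blast
    qed
    have zero: "\<forall>S \<in> clq E c i (r i) {..<n} - clq UNIV c i (r i) P. prod s S = 0"
    proof
      fix S assume S: "S \<in> clq E c i (r i) {..<n} - clq UNIV c i (r i) P"
      then have S1: "S \<subseteq> {..<n}" "card S = r i" "\<forall>x\<in>S. \<forall>y\<in>S. x \<noteq> y \<longrightarrow> {x,y} \<in> E \<and> c {x,y} = i"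
        unfolding clq_def by blast+
      have "\<not> S \<subseteq> P"
      proof
        assume "S \<subseteq> P"
        then have "S \<in> clq UNIV c i (r i) P" using S1 unfolding clq_def by blast
        then show False using S by blast
      qed
      then obtain x where x: "x \<in> S" "x \<notin> P" by blast
      have "s x = 0" using x S1(1) unfolding P_def by auto
      moreover have "finite S" using S1(1) finite_subset by blast
      ultimately show "prod s S = 0" using x by (intro prod_zero) auto
    qed
    show "(\<Sum>S\<in>clq E c i (r i) {..<n}. prod s S) = (\<Sum>S\<in>clq UNIV c i (r i) P. prod s S)"
      by (rule sum.mono_neutral_right[OF finite_clq[OF finite_lessThan] sub zero])
  qed
  obtain g where g: "g \<in> {1..k}" and gB: "Phi k r UNIV c s P \<le> esym P s (r g)"
    using stepB[OF finP pos k r colP] by blast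
  have cardP: "card P \<le> m - 1"
  proof (rule ccontr)
    assume "\<not> card P \<le> m - 1"
    then have "m \<le> card P" by simp
    then obtain S where S: "S \<subseteq> P" "card S = m" "finite S" by (rule obtain_subset_with_card_n)
    have S1: "S \<subseteq> {..<n}" using S(1) Psub by (rule subset_trans)
    have S2: "\<forall>x\<in>S. \<forall>y\<in>S. x \<noteq> y \<longrightarrow> {x, y} \<in> E" using S(1) clP by (meson subsetD)
    have "S \<in> {S. S \<subseteq> {..<n} \<and> card S = m \<and> (\<forall>x\<in>S. \<forall>y\<in>S. x \<noteq> y \<longrightarrow> {x, y} \<in> E)}"
      using S1 S(2) S2 by (intro CollectI conjI)
    moreover have fin: "finite {S. S \<subseteq> {..<n} \<and> card S = m \<and> (\<forall>x\<in>S. \<forall>y\<in>S. x \<noteq> y \<longrightarrow> {x, y} \<in> E)}"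
      by (rule finite_subset[OF _ finite_Pow_iff[THEN iffD2, OF finite_lessThan[of n]]]) (simp add: subset_eq)
    ultimately have "0 < num_cliques n m E" unfolding num_cliques_def
      by (intro card_gt_0_iff[THEN iffD2] conjI) blast+
    then show False using free unfolding Km_free_def by simp
  qed
  have sumP: "sum s P = n"
  proof -
    have "sum s P = sum s {..<n}"
      by (rule sum.mono_neutral_left) (use Psub in \<open>auto simp: P_def\<close>)
    then show ?thesis using sW unfolding WS_def by simp
  qed
  have gC: "esym P s (r g) \<le> num_cliques n (r g) (turan n (m - 1))"
    by (rule stepC[OF Psub cardP _ sumP]) (use m in simp)
  show ?thesis using col_count_Phi[of n k r E c] sle PhiP gB gC g by (intro bexI[of _ g]) auto
qed

lemma turan_is_graph: "is_graph n (turan n p)"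
  unfolding is_graph_def
proof
  fix e assume "e \<in> turan n p"
  then obtain x y where e: "e = {x,y}" "x < n" "y < n" "x mod p \<noteq> y mod p" unfolding turan_def by blast
  then have "x \<noteq> y" by blast
  then show "e \<subseteq> {..<n} \<and> card e = 2" using e by auto
qed

lemma turan_free:
  assumes "0 < p"
  shows "Km_free n (Suc p) (turan n p)"
proof -
  have "{S. S \<subseteq> {..<n} \<and> card S = Suc p \<and> inj_on (\<lambda>x. x mod p) S} = {}"
  proof (rule ccontr)
    assume "\<not> ?thesis"
    then obtain S where S: "S \<subseteq> {..<n}" "card S = Suc p" "inj_on (\<lambda>x. x mod p) S" by blast
    have "card ((\<lambda>x. x mod p) ` S) = Suc p" using S card_image by metis
    moreover have "(\<lambda>x. x mod p) ` S \<subseteq> {..<p}" using assms by auto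
    ultimately have "Suc p \<le> card {..<p}" by (metis card_mono finite_lessThan)
    then show False by simp
  qed
  then show ?thesis unfolding Km_free_def turan_cliques by simp
qed

lemma num_cliques_empty: "2 \<le> r \<Longrightarrow> num_cliques n r {} = 0"
proof -
  assume r: "2 \<le> r"
  have "{S. S \<subseteq> {..<n} \<and> card S = r \<and> (\<forall>x\<in>S. \<forall>y\<in>S. x \<noteq> y \<longrightarrow> {x, y} \<in> ({}::nat set set))} = {}"
  proof (rule ccontr)
    assume "\<not> ?thesis"
    then obtain S where S: "S \<subseteq> {..<n}" "card S = r" "\<forall>x\<in>S. \<forall>y\<in>S. x \<noteq> y \<longrightarrow> {x, y} \<in> ({}::nat set set)" by blast
    have "finite S" using S(1) finite_subset by blast
    then obtain x y where "x \<in> S" "y \<in> S" "x \<noteq> y" using two_elems S(2) r by metis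
    then show False using S(3) by blast
  qed
  then show ?thesis unfolding num_cliques_def by simp
qed

lemma col_mono_turan:
  assumes i: "i \<in> {1..k}" and r: "\<forall>i\<in>{1..k}. 2 \<le> r i"
  shows "col_count n k r T (\<lambda>_. i) = num_cliques n (r i) T"
proof -
  have "col_count n k r T (\<lambda>_. i) = (\<Sum>j=1..k. if j = i then num_cliques n (r i) T else 0)"
    unfolding col_count_def
  proof (rule sum.cong[OF refl])
    fix j assume j: "j \<in> {1..k}"
    show "num_cliques n (r j) {e \<in> T. i = j} = (if j = i then num_cliques n (r i) T else 0)"
    proof (cases "j = i")
      case True then show ?thesis by simp
    next
      case False
      then have "{e \<in> T. i = j} = {}" by auto
      then show ?thesis using False num_cliques_empty r j by simp
    qed
  qed
  also have "\<dots> = num_cliques n (r i) T" using i by simp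
  finally show ?thesis .
qed

theorem mainTheorem8:
  fixes n m k :: nat and r :: "nat \<Rightarrow> nat"
  assumes "m \<ge> 2" and "k \<ge> 1" and "\<forall>i\<in>{1..k}. r i \<ge> 2"
  shows "ex_col n k r m = (MAX i\<in>{1..k}. num_cliques n (r i) (turan n (m - 1)))"
proof -
  let ?T = "turan n (m - 1)"
  let ?R = "MAX i\<in>{1..k}. num_cliques n (r i) ?T"
  let ?V = "{col_count n k r E c | E c. is_graph n E \<and> Km_free n m E \<and> (\<forall>e\<in>E. c e \<in> {1..k})}"
  have finI: "finite ((\<lambda>i. num_cliques n (r i) ?T) ` {1..k})" by simp
  have neI: "(\<lambda>i. num_cliques n (r i) ?T) ` {1..k} \<noteq> {}" using assms(2) by auto
  have ub: "\<And>v. v \<in> ?V \<Longrightarrow> v \<le> ?R"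
  proof -
    fix v assume "v \<in> ?V"
    then obtain E c where v: "v = col_count n k r E c" "Km_free n m E" "\<forall>e\<in>E. c e \<in> {1..k}" by blast
    obtain g where g: "g \<in> {1..k}" "col_count n k r E c \<le> num_cliques n (r g) ?T"
      using upper[OF v(2) v(3) assms(1) assms(2) assms(3)] by blast
    have gR: "num_cliques n (r g) ?T \<le> ?R" using finI g(1) by (intro Max_ge) auto
    show "v \<le> ?R" using v(1) g(2) gR by (rule_tac le_trans) simp_all
  qed
  have "?R \<in> (\<lambda>i. num_cliques n (r i) ?T) ` {1..k}" using finI neI by (rule Max_in)
  then obtain i where i: "i \<in> {1..k}" "?R = num_cliques n (r i) ?T" by auto
  have mfree: "Km_free n m ?T"
  proof -
    have "m = Suc (m - 1)" using assms(1) by simp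
    then show ?thesis using turan_free[of "m - 1" n] assms(1) by simp
  qed
  have inV: "?R \<in> ?V"
  proof -
    have "col_count n k r ?T (\<lambda>_. i) = ?R" using col_mono_turan[OF i(1) assms(3)] i(2) by simp
    moreover have "\<forall>e\<in>?T. (\<lambda>_. i) e \<in> {1..k}" using i(1) by simp
    ultimately have "?R = col_count n k r ?T (\<lambda>_. i) \<and> is_graph n ?T \<and> Km_free n m ?T \<and> (\<forall>e\<in>?T. (\<lambda>_. i) e \<in> {1..k})"
      using turan_is_graph mfree by simp
    then show ?thesis by (intro CollectI exI[of _ ?T] exI[of _ "\<lambda>_::nat set. i"])
  qed
  have finV: "finite ?V" by (rule finite_subset[of _ "{..?R}"]) (use ub in auto)
  show ?thesis unfolding ex_col_def by (rule Max_eqI[OF finV ub inV])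
qed

end
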